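(* Every symmetric group $(G,r)$ of finite multipermutation level $\mathrm{mpl}(G,r)=m$ is a solvable group whose derived (solvable) length is at most $m$.
   Context: A symmetric group is a pair $(G,r)$, $G$ a group, $r(u,v)=({}^uv,u^v)$ an involutive bijection of $G\times G$ with ${}^a1=1,{}^1u=u,1^u=1,a^1=a$, ${}^{ab}u={}^a({}^bu)$, $a^{uv}=(a^u)^v$, ${}^a(uv)=({}^au)({}^{a^u}v)$, $(ab)^u=(a^{{}^bu})(b^u)$, $uv=({}^uv)(u^v)$; it is a non-degenerate symmetric set (non-degenerate involutive solution of the Yang–Baxter equation). For a non-degenerate symmetric set $(X,r)$, the retraction $\mathrm{Ret}(X,r)$ is $X/\!\sim$, where $x\sim y$ iff ${}^xz={}^yz$ for all $z\in X$, with $r_{[X]}([x],[y])=([{}^xy],[x^y])$; $\mathrm{Ret}^m$ is its $m$-fold iterate and $\mathrm{mpl}(X,r)=m$ if $m$ is minimal with $\mathrm{Ret}^m(X,r)$ a one-element set. *)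

theory Defs
  imports "HOL-Algebra.Solvable_Groups"
begin

text \<open>A map r on G x G is written r(u,v) = (lact u v, ract u v), i.e.
  lact u v is the left action (u acting on v), ract u v is the right action (u acted on by v).\<close>

definition lact :: "('a \<times> 'a \<Rightarrow> 'a \<times> 'a) \<Rightarrow> 'a \<Rightarrow> 'a \<Rightarrow> 'a" where
  "lact r u v = fst (r (u, v))"

definition ract :: "('a \<times> 'a \<Rightarrow> 'a \<times> 'a) \<Rightarrow> 'a \<Rightarrow> 'a \<Rightarrow> 'a" where
  "ract r u v = snd (r (u, v))"

definition symmetric_group :: "('a, 'b) monoid_scheme \<Rightarrow> ('a \<times> 'a \<Rightarrow> 'a \<times> 'a) \<Rightarrow> bool" where
  "symmetric_group G r \<longleftrightarrow>
     group G \<and>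
     (\<forall>u\<in>carrier G. \<forall>v\<in>carrier G. r (u, v) \<in> carrier G \<times> carrier G) \<and>
     bij_betw r (carrier G \<times> carrier G) (carrier G \<times> carrier G) \<and>
     (\<forall>u\<in>carrier G. \<forall>v\<in>carrier G. r (r (u, v)) = (u, v)) \<and>
     (\<forall>a\<in>carrier G. lact r a \<one>\<^bsub>G\<^esub> = \<one>\<^bsub>G\<^esub>) \<and>
     (\<forall>u\<in>carrier G. lact r \<one>\<^bsub>G\<^esub> u = u) \<and>
     (\<forall>u\<in>carrier G. ract r \<one>\<^bsub>G\<^esub> u = \<one>\<^bsub>G\<^esub>) \<and>
     (\<forall>a\<in>carrier G. ract r a \<one>\<^bsub>G\<^esub> = a) \<and>
     (\<forall>a\<in>carrier G. \<forall>b\<in>carrier G. \<forall>u\<in>carrier G.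
        lact r (a \<otimes>\<^bsub>G\<^esub> b) u = lact r a (lact r b u)) \<and>
     (\<forall>a\<in>carrier G. \<forall>u\<in>carrier G. \<forall>v\<in>carrier G.
        ract r a (u \<otimes>\<^bsub>G\<^esub> v) = ract r (ract r a u) v) \<and>
     (\<forall>a\<in>carrier G. \<forall>u\<in>carrier G. \<forall>v\<in>carrier G.
        lact r a (u \<otimes>\<^bsub>G\<^esub> v) = lact r a u \<otimes>\<^bsub>G\<^esub> lact r (ract r a u) v) \<and>
     (\<forall>a\<in>carrier G. \<forall>b\<in>carrier G. \<forall>u\<in>carrier G.
        ract r (a \<otimes>\<^bsub>G\<^esub> b) u = ract r a (lact r b u) \<otimes>\<^bsub>G\<^esub> ract r b u) \<and>
     (\<forall>u\<in>carrier G. \<forall>v\<in>carrier G.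
        u \<otimes>\<^bsub>G\<^esub> v = lact r u v \<otimes>\<^bsub>G\<^esub> ract r u v)"

text \<open>Iterated retraction, encoded on the original carrier X:
  Ret^m(X,r) is (canonically) X modulo the equivalence ret_rel X r m, where
  ret_rel 0 is equality and x ~_(m+1) y iff (lact x z) ~_m (lact y z) for all z in X.
  (Indeed the classes of Ret^m are [x]_m and in Ret^m one has [x]_m acting on [z]_m as
  [lact x z]_m, so the retraction relation of Ret^m pulls back to ~_(m+1).)\<close>

fun ret_rel :: "'a set \<Rightarrow> ('a \<times> 'a \<Rightarrow> 'a \<times> 'a) \<Rightarrow> nat \<Rightarrow> 'a \<Rightarrow> 'a \<Rightarrow> bool" where
  "ret_rel X r 0 x y \<longleftrightarrow> x = y"
| "ret_rel X r (Suc m) x y \<longleftrightarrow> (\<forall>z\<in>X. ret_rel X r m (lact r x z) (lact r y z))"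

definition ret_one_point :: "'a set \<Rightarrow> ('a \<times> 'a \<Rightarrow> 'a \<times> 'a) \<Rightarrow> nat \<Rightarrow> bool" where
  "ret_one_point X r m \<longleftrightarrow> X \<noteq> {} \<and> (\<forall>x\<in>X. \<forall>y\<in>X. ret_rel X r m x y)"

definition mpl_eq :: "'a set \<Rightarrow> ('a \<times> 'a \<Rightarrow> 'a \<times> 'a) \<Rightarrow> nat \<Rightarrow> bool" where
  "mpl_eq X r m \<longleftrightarrow> ret_one_point X r m \<and> (\<forall>k<m. \<not> ret_one_point X r k)"

end

theory Submission
  imports Defs
begin

locale symgrp = group G for G (structure) + fixes r
  assumes sg: "symmetric_group G r"
begin

abbreviation "C \<equiv> carrier G"
abbreviation "L \<equiv> lact r"
abbreviation "Q \<equiv> ract r"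
abbreviation "RR j \<equiv> ret_rel (carrier G) r j"

lemma rclosed: "a \<in> C \<Longrightarrow> u \<in> C \<Longrightarrow> r (a, u) \<in> C \<times> C"
  using sg[unfolded symmetric_group_def, THEN conjunct2, THEN conjunct1] by blast

lemma L_closed[simp]: "a \<in> C \<Longrightarrow> u \<in> C \<Longrightarrow> L a u \<in> C"
  unfolding lact_def using rclosed by (metis mem_Times_iff)

lemma Q_closed[simp]: "a \<in> C \<Longrightarrow> u \<in> C \<Longrightarrow> Q a u \<in> C"
  unfolding ract_def using rclosed by (metis mem_Times_iff)

lemma L_mult: "a \<in> C \<Longrightarrow> b \<in> C \<Longrightarrow> u \<in> C \<Longrightarrow> L (a \<otimes> b) u = L a (L b u)"
  using sg[unfolded symmetric_group_def, THEN conjunct2, THEN conjunct2, THEN conjunct2, THEN conjunct2, THEN conjunct2, THEN conjunct2, THEN conjunct2, THEN conjunct2, THEN conjunct1] by blast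

lemma L_one[simp]: "u \<in> C \<Longrightarrow> L \<one> u = u"
  using sg[unfolded symmetric_group_def, THEN conjunct2, THEN conjunct2, THEN conjunct2, THEN conjunct2, THEN conjunct2, THEN conjunct1] by blast

lemma L_inv1[simp]: "a \<in> C \<Longrightarrow> u \<in> C \<Longrightarrow> L (inv a) (L a u) = u"
  by (metis L_mult L_one inv_closed l_inv)

lemma L_inv2[simp]: "a \<in> C \<Longrightarrow> u \<in> C \<Longrightarrow> L a (L (inv a) u) = u"
  by (metis L_mult L_one inv_closed r_inv)

lemma A5: "u \<in> C \<Longrightarrow> v \<in> C \<Longrightarrow> u \<otimes> v = L u v \<otimes> Q u v"
  using sg[unfolded symmetric_group_def, THEN conjunct2, THEN conjunct2, THEN conjunct2, THEN conjunct2, THEN conjunct2, THEN conjunct2, THEN conjunct2, THEN conjunct2, THEN conjunct2, THEN conjunct2, THEN conjunct2, THEN conjunct2] by blast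

lemma Invol: "u \<in> C \<Longrightarrow> v \<in> C \<Longrightarrow> L (L u v) (Q u v) = u"
proof -
  assume a: "u \<in> C" "v \<in> C"
  have "r (r (u, v)) = (u, v)" using sg[unfolded symmetric_group_def, THEN conjunct2, THEN conjunct2, THEN conjunct2, THEN conjunct1] a by blast
  moreover have "r (u,v) = (L u v, Q u v)" unfolding lact_def ract_def by simp
  ultimately show ?thesis unfolding lact_def by (metis fst_conv)
qed

lemma Q_formula: "u \<in> C \<Longrightarrow> v \<in> C \<Longrightarrow> Q u v = L (inv (L u v)) u"
  by (metis Invol L_inv1 L_closed Q_closed)

lemma Q_eq: "u \<in> C \<Longrightarrow> v \<in> C \<Longrightarrow> Q u v = inv (L u v) \<otimes> u \<otimes> v"
  by (metis A5 L_closed Q_closed inv_solve_left m_assoc m_closed inv_closed)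

lemma keyI: assumes w: "w \<in> C" and u: "u \<in> C"
  shows "L w u = w \<otimes> u \<otimes> L (inv u) (inv w)"
proof -
  define s where "s = inv w"
  define v where "v = L (inv u) s"
  have s: "s \<in> C" and v: "v \<in> C" using w u by (auto simp: s_def v_def)
  have Luv: "L u v = s" using u s by (simp add: v_def)
  have "Q u v = L (inv s) u" using Q_formula[OF u v] Luv by simp
  moreover have "Q u v = inv s \<otimes> u \<otimes> v" using Q_eq[OF u v] Luv by simp
  moreover have "inv s = w" using w by (simp add: s_def)
  ultimately show ?thesis by (simp add: v_def s_def)
qed

lemma RR_refl: "x \<in> C \<Longrightarrow> RR j x x"
  by (induction j arbitrary: x) auto

lemma RR_sym: "x \<in> C \<Longrightarrow> y \<in> C \<Longrightarrow> RR j x y \<Longrightarrow> RR j y x"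
  by (induction j arbitrary: x y) auto

lemma RR_trans: "x \<in> C \<Longrightarrow> y \<in> C \<Longrightarrow> z \<in> C \<Longrightarrow> RR j x y \<Longrightarrow> RR j y z \<Longrightarrow> RR j x z"
proof (induction j arbitrary: x y z)
  case 0 thus ?case by simp
next
  case (Suc j)
  have "\<forall>w\<in>C. RR j (L x w) (L z w)"
  proof
    fix w assume w: "w \<in> C"
    have "RR j (L x w) (L y w)" "RR j (L y w) (L z w)" using Suc.prems(4,5) w by simp_all
    thus "RR j (L x w) (L z w)" using Suc.IH[of "L x w" "L y w" "L z w"] Suc.prems(1-3) w by simp
  qed
  thus ?case by simp
qed

lemma RR_mono: "x \<in> C \<Longrightarrow> y \<in> C \<Longrightarrow> RR j x y \<Longrightarrow> RR (Suc j) x y"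
proof (induction j arbitrary: x y)
  case 0 then show ?case by (simp add: RR_refl)
next
  case (Suc j)
  have "\<forall>w\<in>C. RR (Suc j) (L x w) (L y w)"
  proof
    fix w assume w: "w \<in> C"
    have "RR j (L x w) (L y w)" using Suc.prems(3) w by simp
    thus "RR (Suc j) (L x w) (L y w)" using Suc.IH[of "L x w" "L y w"] Suc.prems(1,2) w by simp
  qed
  thus ?case by simp
qed

definition Qc :: "nat \<Rightarrow> bool" where
  "Qc j \<longleftrightarrow> (\<forall>x\<in>C. \<forall>y\<in>C. \<forall>x'\<in>C. \<forall>y'\<in>C. RR j x y \<longrightarrow> RR j x' y' \<longrightarrow> RR j (x \<otimes> x') (y \<otimes> y'))
     \<and> (\<forall>x\<in>C. \<forall>y\<in>C. RR j x y \<longrightarrow> RR j (inv x) (inv y))"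

lemma act_compat:
  assumes q: "Qc j" and u: "u \<in> C" and v: "v \<in> C" and a: "a \<in> C" and h: "RR j u v"
  shows "RR j (L a u) (L a v)"
proof -
  have c: "\<And>x y x' y'. x\<in>C \<Longrightarrow> y\<in>C \<Longrightarrow> x'\<in>C \<Longrightarrow> y'\<in>C \<Longrightarrow> RR j x y \<Longrightarrow> RR j x' y' \<Longrightarrow> RR j (x \<otimes> x') (y \<otimes> y')"
    using q unfolding Qc_def by blast
  have e: "RR j (inv u) (inv v)" using q u v h unfolding Qc_def by blast
  then have "RR (Suc j) (inv u) (inv v)" using RR_mono u v by simp
  then have 1: "RR j (L (inv u) (inv a)) (L (inv v) (inv a))" using a by simp
  have 2: "RR j (a \<otimes> u) (a \<otimes> v)" using c[OF a a u v RR_refl[OF a] h] .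
  have "RR j (a \<otimes> u \<otimes> L (inv u) (inv a)) (a \<otimes> v \<otimes> L (inv v) (inv a))"
    by (rule c[OF _ _ _ _ 2 1]) (use a u v in simp_all)
  then show ?thesis by (simp only: keyI[OF a u] keyI[OF a v])
qed

lemma Qc_all: "Qc j"
proof (induction j)
  case 0 then show ?case unfolding Qc_def by simp
next
  case (Suc j)
  note q = Suc.IH
  have c: "RR (Suc j) (x \<otimes> x') (y \<otimes> y')"
    if xs: "x\<in>C" "y\<in>C" "x'\<in>C" "y'\<in>C" and h: "RR (Suc j) x y" "RR (Suc j) x' y'" for x y x' y'
  proof -
    have "RR j (L (x \<otimes> x') z) (L (y \<otimes> y') z)" if z: "z \<in> C" for z
    proof -
      have 1: "RR j (L x (L x' z)) (L y (L x' z))" using h(1) xs z by simp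
      have h2: "RR j (L x' z) (L y' z)" using h(2) z by simp
      have 2: "RR j (L y (L x' z)) (L y (L y' z))"
        by (rule act_compat[OF q _ _ _ h2]) (use xs z in simp_all)
      show ?thesis using RR_trans[OF _ _ _ 1 2] xs z by (simp add: L_mult)
    qed
    then show ?thesis by simp
  qed
  have e: "RR (Suc j) (inv x) (inv y)"
    if xs: "x\<in>C" "y\<in>C" and h: "RR (Suc j) x y" for x y
  proof -
    have "RR j (L (inv x) z) (L (inv y) z)" if z: "z \<in> C" for z
    proof -
      define w where "w = L (inv x) z"
      have w: "w \<in> C" using xs z by (simp add: w_def)
      have "RR j (L x w) (L y w)" using h w by simp
      then have "RR j z (L y w)" using xs z by (simp add: w_def)
      have "RR j (L (inv y) z) (L (inv y) (L y w))"
        by (rule act_compat[OF q _ _ _ \<open>RR j z (L y w)\<close>]) (use xs z w in simp_all)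
      then have "RR j (L (inv y) z) w" using xs w by simp
      then have "RR j w (L (inv y) z)" by (rule RR_sym[rotated 2]) (use xs z w in simp_all)
      then show ?thesis by (simp add: w_def)
    qed
    then show ?thesis by simp
  qed
  show ?case unfolding Qc_def using c e by blast
qed

lemma RR_mult: "x\<in>C \<Longrightarrow> y\<in>C \<Longrightarrow> x'\<in>C \<Longrightarrow> y'\<in>C \<Longrightarrow> RR j x y \<Longrightarrow> RR j x' y' \<Longrightarrow> RR j (x \<otimes> x') (y \<otimes> y')"
  using Qc_all unfolding Qc_def by blast

lemma RR_inv: "x\<in>C \<Longrightarrow> y\<in>C \<Longrightarrow> RR j x y \<Longrightarrow> RR j (inv x) (inv y)"
  using Qc_all unfolding Qc_def by blast

definition N :: "nat \<Rightarrow> 'a set" where "N j = {x \<in> C. RR j x \<one>}"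

lemma N_subgroup: "subgroup (N j) G"
proof (rule subgroupI)
  show "N j \<subseteq> C" unfolding N_def by auto
  show "N j \<noteq> {}" unfolding N_def using RR_refl[of \<one>] by auto
  show "inv a \<in> N j" if "a \<in> N j" for a
    using that RR_inv[of a \<one> j] unfolding N_def by auto
  show "a \<otimes> b \<in> N j" if "a \<in> N j" "b \<in> N j" for a b
    using that RR_mult[of a \<one> b \<one> j] unfolding N_def by auto
qed

lemma comm_in: assumes x: "x \<in> N (Suc j)" and y: "y \<in> N (Suc j)"
  shows "x \<otimes> y \<otimes> inv x \<otimes> inv y \<in> N j"
proof -
  have xC: "x \<in> C" and yC: "y \<in> C" using x y unfolding N_def by auto
  have hx: "\<And>z. z \<in> C \<Longrightarrow> RR j (L x z) z" using x unfolding N_def by auto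
  have hy: "\<And>z. z \<in> C \<Longrightarrow> RR j (L y z) z" using y unfolding N_def by auto
  have 1: "RR j (L x y) y" using hx yC .
  have "RR j (inv (L x y)) (inv y)" using RR_inv[OF _ _ 1] xC yC by simp
  then have "RR (Suc j) (inv (L x y)) (inv y)" using RR_mono xC yC by simp
  then have 2: "RR j (L (inv (L x y)) x) (L (inv y) x)" using xC by simp
  have "RR j (L y (L (inv y) x)) (L (inv y) x)" by (rule hy) (use xC yC in simp)
  then have "RR j x (L (inv y) x)" using xC yC by simp
  then have 3: "RR j (L (inv y) x) x" by (rule RR_sym[rotated 2]) (use xC yC in simp_all)
  have 4: "RR j (Q x y) x" using RR_trans[OF _ _ _ 2 3] xC yC Q_formula[OF xC yC] by simp
  have "RR j (L x y \<otimes> Q x y) (y \<otimes> x)" using RR_mult[OF _ _ _ _ 1 4] xC yC by simp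
  then have 5: "RR j (x \<otimes> y) (y \<otimes> x)" using A5[OF xC yC] by simp
  have "RR j (x \<otimes> y \<otimes> inv x \<otimes> inv y) (y \<otimes> x \<otimes> inv x \<otimes> inv y)"
    using RR_mult[OF _ _ _ _ RR_mult[OF _ _ _ _ 5 RR_refl[of "inv x"]] RR_refl[of "inv y"]] xC yC
    by simp
  moreover have "y \<otimes> x \<otimes> inv x \<otimes> inv y = \<one>" using xC yC by (simp add: m_assoc)
  ultimately show ?thesis using xC yC unfolding N_def by simp
qed

lemma derived_N: "derived G (N (Suc j)) \<subseteq> N j"
  unfolding derived_def
proof (rule generate_subgroup_incl[OF _ N_subgroup])
  show "derived_set G (N (Suc j)) \<subseteq> N j" using comm_in by blast
qed

lemma derived_seq: assumes "\<forall>x\<in>C. \<forall>y\<in>C. RR m x y"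
  shows "k \<le> m \<Longrightarrow> (derived G ^^ k) C \<subseteq> N (m - k)"
proof (induction k)
  case 0 then show ?case using assms unfolding N_def by auto
next
  case (Suc k)
  then have "(derived G ^^ k) C \<subseteq> N (Suc (m - Suc k))" by (simp add: Suc_diff_Suc)
  then have "(derived G ^^ Suc k) C \<subseteq> derived G (N (Suc (m - Suc k)))"
    using mono_derived by simp
  then show ?case using derived_N by blast
qed

end

theorem mainTheorem7:
  fixes G :: "('a, 'b) monoid_scheme" and r :: "'a \<times> 'a \<Rightarrow> 'a \<times> 'a" and m :: nat
  assumes "symmetric_group G r"
    and "mpl_eq (carrier G) r m"
  shows "solvable G \<and> (derived G ^^ m) (carrier G) = {\<one>\<^bsub>G\<^esub>}"
proof -
  have g: "group G" using assms(1) unfolding symmetric_group_def by (rule conjunct1)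
  interpret symgrp G r by (intro symgrp.intro symgrp_axioms.intro g assms(1))
  have all: "\<forall>x\<in>carrier G. \<forall>y\<in>carrier G. ret_rel (carrier G) r m x y"
    using assms(2) unfolding mpl_eq_def ret_one_point_def by blast
  have "(derived G ^^ m) (carrier G) \<subseteq> N 0" using derived_seq[OF all, of m] by simp
  also have "N 0 = {\<one>\<^bsub>G\<^esub>}" unfolding N_def by auto
  finally have sub: "(derived G ^^ m) (carrier G) \<subseteq> {\<one>\<^bsub>G\<^esub>}" .
  have "\<one>\<^bsub>G\<^esub> \<in> (derived G ^^ m) (carrier G)"
    using subgroup.one_closed[OF exp_of_derived_is_subgroup[OF subgroup_self]] .
  with sub have eq: "(derived G ^^ m) (carrier G) = {\<one>\<^bsub>G\<^esub>}" by auto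
  then show ?thesis using solvable_iff_trivial_derived_seq by blast
qed

end
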